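(* Let $\Delta$ be a finite set with $|\Delta|\ge2$, $\ell\ge2$, $\Omega=\Delta^\ell$, $W=\mathrm{Sym}\,\Delta\wr S_\ell$ in product action on $\Omega$, $G\le W$, and let $M$ be a minimal normal subgroup of $G$ transitive on $\Omega$, $M=T_1\times\cdots\times T_k$ with the $T_i$ isomorphic finite simple groups. Let $\Gamma$ be a connected graph with vertex set $\Omega$ such that $G\le\mathrm{Aut}\,\Gamma$. Suppose $M$ is non-regular on $\Omega$ and that, for vertices $\alpha$, the stabiliser $G_\alpha$ is quasiprimitive on the neighbourhood $\Gamma(\alpha)$. Then $\Gamma$ is $M$-arc-transitive, and so $M_\alpha$ is transitive on $\Gamma(\alpha)$ for all $\alpha\in\Omega$.
   Context: Product action: $(\delta_1,\dots,\delta_\ell)^{(g_1,\dots,g_\ell)h}=(\delta_{1h^{-1}}g_{1h^{-1}},\dots,\delta_{\ell h^{-1}}g_{\ell h^{-1}})$. $\Gamma(\alpha)$ is the set of neighbours of $\alpha$. A permutation group is quasiprimitive if every non-trivial normal subgroup is transitive. $\Gamma$ is $M$-arc-transitive if $M$ acts transitively on the ordered pairs of adjacent vertices. Graphs are finite, simple and undirected. *)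

theory Defs
  imports "HOL-Algebra.Algebra" "HOL-Library.FuncSet"
begin

definition perm_grp :: "'b set \<Rightarrow> ('b \<Rightarrow> 'b) set \<Rightarrow> ('b \<Rightarrow> 'b) monoid" where
  "perm_grp S H = (BijGroup S)\<lparr>carrier := H\<rparr>"

definition power_set :: "'a set \<Rightarrow> nat \<Rightarrow> (nat \<Rightarrow> 'a) set" where
  "power_set D l = ({..<l} \<rightarrow>\<^sub>E D)"

text \<open>The wreath product Sym D wr S_l in product action on D^l:
  (d_1,..,d_l)^((g_1,..,g_l)h) has coordinate h(j) equal to g_j(d_j),
  i.e. coordinate i equal to g_{i h^-1}(d_{i h^-1}).\<close>
definition wreath_prod_action :: "'a set \<Rightarrow> nat \<Rightarrow> ((nat \<Rightarrow> 'a) \<Rightarrow> (nat \<Rightarrow> 'a)) set" where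
  "wreath_prod_action D l =
    {s \<in> Bij (power_set D l). \<exists>(g :: nat \<Rightarrow> 'a \<Rightarrow> 'a) (h :: nat \<Rightarrow> nat).
        bij_betw h {..<l} {..<l} \<and> (\<forall>j<l. bij_betw (g j) D D) \<and>
        (\<forall>d \<in> power_set D l. \<forall>j<l. s d (h j) = g j (d j))}"

definition minimal_normal :: "'c set \<Rightarrow> ('c, 'd) monoid_scheme \<Rightarrow> bool" where
  "minimal_normal N G \<longleftrightarrow> normal N G \<and> N \<noteq> {\<one>\<^bsub>G\<^esub>} \<and>
     (\<forall>K. normal K G \<and> K \<subseteq> N \<longrightarrow> K = {\<one>\<^bsub>G\<^esub>} \<or> K = N)"

definition transitive_on :: "('b \<Rightarrow> 'b) set \<Rightarrow> 'b set \<Rightarrow> bool" where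
  "transitive_on H S \<longleftrightarrow> (\<forall>x\<in>S. \<forall>y\<in>S. \<exists>h\<in>H. h x = y)"

definition stabiliser :: "('b \<Rightarrow> 'b) set \<Rightarrow> 'b \<Rightarrow> ('b \<Rightarrow> 'b) set" where
  "stabiliser H a = {h \<in> H. h a = a}"

definition regular_on :: "('b \<Rightarrow> 'b) set \<Rightarrow> 'b set \<Rightarrow> bool" where
  "regular_on H S \<longleftrightarrow> transitive_on H S \<and> (\<forall>a\<in>S. stabiliser H a = {\<lambda>x\<in>S. x})"

text \<open>A group H of permutations of Omega, leaving Y invariant, induces a permutation
  group on Y; it is quasiprimitive iff every normal subgroup of H acting non-trivially
  on Y is transitive on Y (normal subgroups of the induced group are exactly the images
  of normal subgroups of H).\<close>
definition quasiprimitive_on :: "'b set \<Rightarrow> ('b \<Rightarrow> 'b) set \<Rightarrow> 'b set \<Rightarrow> bool" where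
  "quasiprimitive_on S H Y \<longleftrightarrow>
     (\<forall>N. normal N (perm_grp S H) \<and> (\<exists>n\<in>N. \<exists>y\<in>Y. n y \<noteq> y) \<longrightarrow> transitive_on N Y)"

definition simple_graph :: "'b set \<Rightarrow> ('b \<Rightarrow> 'b \<Rightarrow> bool) \<Rightarrow> bool" where
  "simple_graph V E \<longleftrightarrow> finite V \<and> (\<forall>x y. E x y \<longrightarrow> x \<in> V \<and> y \<in> V) \<and>
     (\<forall>x y. E x y \<longrightarrow> E y x) \<and> (\<forall>x. \<not> E x x)"

definition connected_graph :: "'b set \<Rightarrow> ('b \<Rightarrow> 'b \<Rightarrow> bool) \<Rightarrow> bool" where
  "connected_graph V E \<longleftrightarrow> (\<forall>x\<in>V. \<forall>y\<in>V. (x, y) \<in> {(u, v). E u v}\<^sup>*)"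

definition neighbours :: "('b \<Rightarrow> 'b \<Rightarrow> bool) \<Rightarrow> 'b \<Rightarrow> 'b set" where
  "neighbours E a = {b. E a b}"

definition automorphisms_of :: "('b \<Rightarrow> 'b) set \<Rightarrow> 'b set \<Rightarrow> ('b \<Rightarrow> 'b \<Rightarrow> bool) \<Rightarrow> bool" where
  "automorphisms_of H V E \<longleftrightarrow> (\<forall>g\<in>H. \<forall>x\<in>V. \<forall>y\<in>V. E x y \<longleftrightarrow> E (g x) (g y))"

definition arc_transitive :: "('b \<Rightarrow> 'b) set \<Rightarrow> ('b \<Rightarrow> 'b \<Rightarrow> bool) \<Rightarrow> bool" where
  "arc_transitive H E \<longleftrightarrow>
     (\<forall>a b c d. E a b \<and> E c d \<longrightarrow> (\<exists>h\<in>H. h a = c \<and> h b = d))"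

end

theory Submission
  imports Defs
begin

lemma (in group) normal_restrict:
  assumes H: "subgroup H G" and A: "subgroup A G" and AH: "A \<subseteq> H"
    and N: "N \<lhd> G\<lparr>carrier:=H\<rparr>"
  shows "N \<inter> A \<lhd> G\<lparr>carrier:=A\<rparr>"
proof -
  have gH: "group (G\<lparr>carrier:=H\<rparr>)" using H subgroup_imp_group by blast
  have gA: "group (G\<lparr>carrier:=A\<rparr>)" using A subgroup_imp_group by blast
  have NsH: "subgroup N (G\<lparr>carrier:=H\<rparr>)" using N normal_imp_subgroup by blast
  have NsG: "subgroup N G" using incl_subgroup[OF H NsH] .
  have NAs: "subgroup (N \<inter> A) G" using subgroups_Inter_pair[OF NsG A] .
  have NAsub: "subgroup (N \<inter> A) (G\<lparr>carrier:=A\<rparr>)" using subgroup_incl[OF NAs A] by blast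
  have conjH: "\<forall>x\<in>H. \<forall>h\<in>N. x \<otimes> h \<otimes> inv\<^bsub>G\<lparr>carrier:=H\<rparr>\<^esub> x \<in> N"
    using group.normal_inv_iff[OF gH] N by simp
  show ?thesis
    unfolding group.normal_inv_iff[OF gA]
  proof (intro conjI NAsub ballI)
    fix x h assume x: "x \<in> carrier (G\<lparr>carrier:=A\<rparr>)" and h: "h \<in> N \<inter> A"
    have xA: "x \<in> A" using x by simp
    have inv1: "inv\<^bsub>G\<lparr>carrier:=A\<rparr>\<^esub> x = inv x" using m_inv_consistent[OF A xA] .
    have xH: "x \<in> H" using xA AH by blast
    have inv2: "inv\<^bsub>G\<lparr>carrier:=H\<rparr>\<^esub> x = inv x" using m_inv_consistent[OF H xH] .
    have "x \<otimes> h \<otimes> inv x \<in> N" using conjH xH h inv2 by auto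
    moreover have "x \<otimes> h \<otimes> inv x \<in> A"
      using xA h A by (meson IntD2 subgroup.m_closed subgroup.m_inv_closed)
    ultimately show "x \<otimes>\<^bsub>G\<lparr>carrier:=A\<rparr>\<^esub> h \<otimes>\<^bsub>G\<lparr>carrier:=A\<rparr>\<^esub> inv\<^bsub>G\<lparr>carrier:=A\<rparr>\<^esub> x \<in> N \<inter> A"
      using inv1 by simp
  qed
qed

lemma Bij_mult: "f \<in> Bij S \<Longrightarrow> g \<in> Bij S \<Longrightarrow> f \<otimes>\<^bsub>BijGroup S\<^esub> g = compose S f g"
  by (simp add: BijGroup_def)

lemma Bij_one: "\<one>\<^bsub>BijGroup S\<^esub> = (\<lambda>x\<in>S. x)"
  by (simp add: BijGroup_def)

lemma Bij_carrier: "carrier (BijGroup S) = Bij S"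
  by (simp add: BijGroup_def)

lemma Bij_maps: "f \<in> Bij S \<Longrightarrow> x \<in> S \<Longrightarrow> f x \<in> S"
  using Bij_imp_funcset by blast

lemma stab_Bij_subgroup:
  assumes a: "a \<in> S"
  shows "subgroup {g \<in> Bij S. g a = a} (BijGroup S)"
proof (rule group.subgroupI[OF group_BijGroup])
  show "{g \<in> Bij S. g a = a} \<subseteq> carrier (BijGroup S)" by (auto simp: Bij_carrier)
  show "{g \<in> Bij S. g a = a} \<noteq> {}" using id_Bij[of S] a by auto
next
  fix g assume g: "g \<in> {g \<in> Bij S. g a = a}"
  then have gB: "g \<in> Bij S" and ga: "g a = a" by auto
  have "inj_on g S" using gB by (simp add: Bij_def bij_betw_def)
  then have "inv_into S g (g a) = a" using a by (simp add: inv_into_f_f)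
  then show "inv\<^bsub>BijGroup S\<^esub> g \<in> {g \<in> Bij S. g a = a}"
    using inv_BijGroup[OF gB] restrict_inv_into_Bij[OF gB] ga a by simp
next
  fix g h assume g: "g \<in> {g \<in> Bij S. g a = a}" and h: "h \<in> {g \<in> Bij S. g a = a}"
  have "compose S g h \<in> Bij S" using g h compose_Bij by blast
  moreover have "compose S g h a = a" using g h a by (simp add: compose_def)
  ultimately show "g \<otimes>\<^bsub>BijGroup S\<^esub> h \<in> {g \<in> Bij S. g a = a}"
    using g h by (simp add: Bij_mult)
qed

theorem lemma3p2:
  fixes D :: "'a set" and l :: nat
    and G M :: "((nat \<Rightarrow> 'a) \<Rightarrow> (nat \<Rightarrow> 'a)) set"
    and E :: "(nat \<Rightarrow> 'a) \<Rightarrow> (nat \<Rightarrow> 'a) \<Rightarrow> bool"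
  assumes "finite D" and "card D \<ge> 2" and "l \<ge> 2"
    and "subgroup G (BijGroup (power_set D l))"
    and "G \<subseteq> wreath_prod_action D l"
    and "minimal_normal M (perm_grp (power_set D l) G)"
    and "transitive_on M (power_set D l)"
    and "\<exists>(k::nat) (T :: nat \<Rightarrow> ((nat \<Rightarrow> 'a) \<Rightarrow> (nat \<Rightarrow> 'a)) set).
           (\<forall>i<k. subgroup (T i) (perm_grp (power_set D l) M) \<and>
                  simple_group (perm_grp (power_set D l) (T i)) \<and>
                  perm_grp (power_set D l) (T i) \<cong> perm_grp (power_set D l) (T 0)) \<and>
           perm_grp (power_set D l) M \<cong>
             product_group {..<k} (\<lambda>i. perm_grp (power_set D l) (T i))"
    and "simple_graph (power_set D l) E"
    and "connected_graph (power_set D l) E"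
    and "automorphisms_of G (power_set D l) E"
    and "\<not> regular_on M (power_set D l)"
    and "\<forall>a \<in> power_set D l.
           quasiprimitive_on (power_set D l) (stabiliser G a) (neighbours E a)"
  shows "arc_transitive M E \<and>
         (\<forall>a \<in> power_set D l. transitive_on (stabiliser M a) (neighbours E a))"
proof -
  define S where "S = power_set D l"
  have grp: "group (BijGroup S)" by (rule group_BijGroup)
  have Gsub: "subgroup G (BijGroup S)" using assms(4) S_def by simp
  have GB: "G \<subseteq> Bij S" using subgroup.subset[OF Gsub] by (simp add: Bij_carrier)
  have nM: "M \<lhd> (BijGroup S)\<lparr>carrier := G\<rparr>"
    using assms(6) by (simp add: minimal_normal_def perm_grp_def S_def)
  have MsG': "subgroup M ((BijGroup S)\<lparr>carrier := G\<rparr>)" using nM normal_imp_subgroup by blast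
  have Msub: "subgroup M (BijGroup S)" using group.incl_subgroup[OF grp Gsub MsG'] .
  have MG: "M \<subseteq> G" using subgroup.subset[OF MsG'] by simp
  have MB: "M \<subseteq> Bij S" using MG GB by blast
  have mclosed: "\<And>m n. m \<in> M \<Longrightarrow> n \<in> M \<Longrightarrow> compose S m n \<in> M"
  proof -
    fix m n assume m: "m \<in> M" and n: "n \<in> M"
    have "m \<otimes>\<^bsub>BijGroup S\<^esub> n \<in> M" using subgroup.m_closed[OF Msub m n] .
    moreover have "m \<in> Bij S" "n \<in> Bij S" using m n MB by blast+
    ultimately show "compose S m n \<in> M" by (simp add: Bij_mult)
  qed
  have minv: "\<And>m. m \<in> M \<Longrightarrow> \<exists>m'\<in>M. \<forall>x\<in>S. m (m' x) = x \<and> m' (m x) = x"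
  proof -
    fix m assume m: "m \<in> M"
    define m' where "m' = inv\<^bsub>BijGroup S\<^esub> m"
    have m'M: "m' \<in> M" using subgroup.m_inv_closed[OF Msub m] m'_def by simp
    have mc: "m \<in> carrier (BijGroup S)" using m MB by (simp add: Bij_carrier subsetD)
    have "m \<otimes>\<^bsub>BijGroup S\<^esub> m' = \<one>\<^bsub>BijGroup S\<^esub>"
      using group.r_inv[OF grp mc] m'_def by simp
    moreover have mB: "m \<in> Bij S" "m' \<in> Bij S" using m m'M MB by blast+
    ultimately have 1: "compose S m m' = (\<lambda>x\<in>S. x)" by (simp add: Bij_mult Bij_one)
    have "m' \<otimes>\<^bsub>BijGroup S\<^esub> m = \<one>\<^bsub>BijGroup S\<^esub>"
      using group.l_inv[OF grp mc] m'_def by simp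
    then have 2: "compose S m' m = (\<lambda>x\<in>S. x)" using mB by (simp add: Bij_mult Bij_one)
    have "\<forall>x\<in>S. m (m' x) = x \<and> m' (m x) = x"
    proof
      fix x assume x: "x \<in> S"
      show "m (m' x) = x \<and> m' (m x) = x"
        using fun_cong[OF 1, of x] fun_cong[OF 2, of x] x by (simp add: compose_def)
    qed
    then show "\<exists>m'\<in>M. \<forall>x\<in>S. m (m' x) = x \<and> m' (m x) = x" using m'M by blast
  qed
  have maps: "\<And>m x. m \<in> M \<Longrightarrow> x \<in> S \<Longrightarrow> m x \<in> S"
  proof -
    fix m x assume "m \<in> M" "x \<in> S"
    then have "m \<in> Bij S" "x \<in> S" using MB by auto
    then show "m x \<in> S" by (rule Bij_maps)
  qed
  have trans: "\<forall>x\<in>S. \<forall>y\<in>S. \<exists>m\<in>M. m x = y" using assms(7) S_def by (simp add: transitive_on_def)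
  have EV: "\<And>x y. E x y \<Longrightarrow> x \<in> S \<and> y \<in> S" using assms(9) S_def by (simp add: simple_graph_def)
  have aut: "\<And>g x y. g \<in> G \<Longrightarrow> x \<in> S \<Longrightarrow> y \<in> S \<Longrightarrow> E x y \<longleftrightarrow> E (g x) (g y)"
    using assms(11) S_def by (simp add: automorphisms_of_def)
  have conn: "\<And>x y. x \<in> S \<Longrightarrow> y \<in> S \<Longrightarrow> (x, y) \<in> {(u, v). E u v}\<^sup>*"
    using assms(10) S_def by (simp add: connected_graph_def)
  have loc: "\<forall>a\<in>S. transitive_on (stabiliser M a) (neighbours E a)"
  proof (rule ccontr)
    assume "\<not> ?thesis"
    then obtain a0 where a0: "a0 \<in> S" and nt: "\<not> transitive_on (stabiliser M a0) (neighbours E a0)"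
      by blast
    have stabG: "subgroup (stabiliser G a0) (BijGroup S)"
    proof -
      have "stabiliser G a0 = G \<inter> {g \<in> Bij S. g a0 = a0}" using GB by (auto simp: stabiliser_def)
      then show ?thesis
        using group.subgroups_Inter_pair[OF grp Gsub stab_Bij_subgroup[OF a0]] by simp
    qed
    have "M \<inter> stabiliser G a0 \<lhd> (BijGroup S)\<lparr>carrier := stabiliser G a0\<rparr>"
      by (rule group.normal_restrict[OF grp Gsub stabG _ nM]) (auto simp: stabiliser_def)
    moreover have "M \<inter> stabiliser G a0 = stabiliser M a0" using MG by (auto simp: stabiliser_def)
    ultimately have nN: "normal (stabiliser M a0) (perm_grp S (stabiliser G a0))"
      by (simp add: perm_grp_def)
    have qp: "quasiprimitive_on S (stabiliser G a0) (neighbours E a0)" using assms(13) a0 S_def by simp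
    have P0: "\<forall>n\<in>M. n a0 = a0 \<longrightarrow> (\<forall>y. E a0 y \<longrightarrow> n y = y)"
      using qp nN nt unfolding quasiprimitive_on_def by (auto simp: stabiliser_def neighbours_def)
    have P: "\<forall>b\<in>S. \<forall>n\<in>M. n b = b \<longrightarrow> (\<forall>y. E b y \<longrightarrow> n y = y)"
    proof (intro ballI impI allI)
      fix b n y assume b: "b \<in> S" and n: "n \<in> M" and nb: "n b = b" and Eby: "E b y"
      obtain m where m: "m \<in> M" and ma: "m a0 = b" using trans a0 b by blast
      obtain m' where m': "m' \<in> M" and mm: "\<forall>x\<in>S. m (m' x) = x \<and> m' (m x) = x"
        using minv[OF m] by blast
      have y: "y \<in> S" using EV Eby by blast
      define n' where "n' = compose S m' (compose S n m)"
      have n'M: "n' \<in> M" using mclosed m m' n n'_def by simp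
      have mma: "m' (m a0) = a0" using mm a0 by blast
      have n'a: "n' a0 = a0" using a0 ma nb mma b by (simp add: n'_def compose_def maps m)
      have y': "m' y \<in> S" using maps m' y by blast
      have "E a0 (m' y)" using aut[OF _ a0 y'] m MG ma mm y Eby by auto
      then have "n' (m' y) = m' y" using P0 n'M n'a by blast
      then have "m' (n y) = m' y" using y' mm y by (simp add: n'_def compose_def maps m)
      then have "m (m' (n y)) = m (m' y)" by simp
      then show "n y = y" using mm y maps[OF n y] by simp
    qed
    have "regular_on M S"
      unfolding regular_on_def
    proof (intro conjI ballI)
      show "transitive_on M S" using assms(7) S_def by simp
    next
      fix a assume a: "a \<in> S"
      show "stabiliser M a = {\<lambda>x\<in>S. x}"
      proof
        show "{\<lambda>x\<in>S. x} \<subseteq> stabiliser M a"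
          using subgroup.one_closed[OF Msub] a by (simp add: Bij_one stabiliser_def)
      next
        show "stabiliser M a \<subseteq> {\<lambda>x\<in>S. x}"
        proof
          fix n assume "n \<in> stabiliser M a"
          then have n: "n \<in> M" and na: "n a = a" by (auto simp: stabiliser_def)
          have fix_all: "n x = x" if x: "x \<in> S" for x
          proof -
            have "(a, x) \<in> {(u, v). E u v}\<^sup>*" using conn a x by blast
            then show ?thesis
            proof (induction rule: rtrancl_induct)
              case base then show ?case using na .
            next
              case (step u v)
              then have "E u v" by simp
              then show ?case using P EV n step.IH by blast
            qed
          qed
          have ext: "n \<in> extensional S" using n MB Bij_imp_extensional by blast
          have "n = (\<lambda>x\<in>S. x)"
          proof
            fix x show "n x = (\<lambda>x\<in>S. x) x"
              using fix_all ext by (cases "x \<in> S") (auto simp: extensional_def)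
          qed
          then show "n \<in> {\<lambda>x\<in>S. x}" by simp
        qed
      qed
    qed
    then show False using assms(12) S_def by simp
  qed
  have arc: "arc_transitive M E"
    unfolding arc_transitive_def
  proof (intro allI impI)
    fix a b c d assume h: "E a b \<and> E c d"
    then have a: "a \<in> S" and b: "b \<in> S" and c: "c \<in> S" and d: "d \<in> S" using EV by blast+
    obtain m where m: "m \<in> M" and mac: "m a = c" using trans a c by blast
    have "E c (m b)" using aut[OF _ a b] m MG h mac by auto
    then obtain n where n: "n \<in> stabiliser M c" and nd: "n (m b) = d"
      using loc c h unfolding transitive_on_def neighbours_def by blast
    have nM: "n \<in> M" and nc: "n c = c" using n by (auto simp: stabiliser_def)
    have "compose S n m \<in> M" using mclosed nM m by blast
    moreover have "compose S n m a = c \<and> compose S n m b = d"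
      using a b mac nc nd by (simp add: compose_def)
    ultimately show "\<exists>h\<in>M. h a = c \<and> h b = d" by blast
  qed
  show ?thesis using arc loc S_def by simp
qed

end
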